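(* Let $n\ge 3$ and let $f:[n]\to\mathbb{R}$ be a function having at most $2$ distinct discrete derivatives. Consider the following deterministic adaptive procedure: (1) Query $f(1),f(2),f(n-1),f(n)$. (2) Define the affine functions $f_1(x)=f(1)+(x-1)\bigl(f(2)-f(1)\bigr)$ and $f_2(x)=f(n)-(n-x)\bigl(f(n)-f(n-1)\bigr)$. (3) If there is no $j\in[n]$ with $f_1(j)=f_2(j)$, reject. Otherwise pick any such $j\in[n]$ and query $f(j)$. (4) Reject if the restriction of $f$ to $\{1,2,j,n-1,n\}$ is not convex or if $f(j)\neq f_1(j)$; otherwise accept. Then this procedure makes at most $5$ queries, accepts every convex such $f$, and rejects every such $f$ that is not convex. In particular, there is a deterministic algorithm that, given oracle access to any $f:[n]\to\mathbb{R}$ with at most $2$ distinct discrete derivatives, decides exactly whether $f$ is convex using at most $5$ adaptive queries.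
   Context: For $f:[n]\to\mathbb{R}$ (where $[n]=\{1,\dots,n\}$), the discrete derivative at $i\in[n-1]$ is $\Delta_f(i)=f(i+1)-f(i)$; the number of distinct discrete derivatives of $f$ is the cardinality of $\{\Delta_f(i): i\in[n-1]\}$. For a finite set $B\subseteq\mathbb{R}$, a function $g:B\to\mathbb{R}$ is convex if $\frac{g(y)-g(x)}{y-x}\le\frac{g(z)-g(y)}{z-y}$ for all $x<y<z$ in $B$; for $B=[n]$ this is equivalent to $\Delta_g$ being non-decreasing. "Adaptive" means later query points may depend on answers to earlier queries. *)

theory Defs
  imports Main "HOL.Real"
begin

text \<open>Functions f : [n] -> R are modelled as f :: nat => real; only the values on {1..n} matter.\<close>

definition discrete_derivs :: "nat \<Rightarrow> (nat \<Rightarrow> real) \<Rightarrow> real set" where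
  "discrete_derivs n f = {f (i + 1) - f i | i. i \<in> {1..n - 1}}"

definition num_discrete_derivs :: "nat \<Rightarrow> (nat \<Rightarrow> real) \<Rightarrow> nat" where
  "num_discrete_derivs n f = card (discrete_derivs n f)"

definition convex_on_pts :: "nat set \<Rightarrow> (nat \<Rightarrow> real) \<Rightarrow> bool" where
  "convex_on_pts B g \<longleftrightarrow>
     (\<forall>x\<in>B. \<forall>y\<in>B. \<forall>z\<in>B. x < y \<and> y < z \<longrightarrow>
        (g y - g x) / (real y - real x) \<le> (g z - g y) / (real z - real y))"

definition aff1 :: "(nat \<Rightarrow> real) \<Rightarrow> real \<Rightarrow> real" where
  "aff1 f x = f 1 + (x - 1) * (f 2 - f 1)"

definition aff2 :: "nat \<Rightarrow> (nat \<Rightarrow> real) \<Rightarrow> real \<Rightarrow> real" where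
  "aff2 n f x = f n - (real n - x) * (f n - f (n - 1))"

definition candidates :: "nat \<Rightarrow> (nat \<Rightarrow> real) \<Rightarrow> nat set" where
  "candidates n f = {j \<in> {1..n}. aff1 f (real j) = aff2 n f (real j)}"

definition final_test :: "nat \<Rightarrow> (nat \<Rightarrow> real) \<Rightarrow> nat \<Rightarrow> bool" where
  "final_test n f j \<longleftrightarrow> convex_on_pts {1, 2, j, n - 1, n} f \<and> f j = aff1 f (real j)"

definition first_queries :: "nat \<Rightarrow> nat set" where
  "first_queries n = {1, 2, n - 1, n}"

end

theory Submission
  imports Defs
begin

lemma sum_le:
  assumes "lo \<le> hi" "\<And>i. lo \<le> i \<Longrightarrow> i < hi \<Longrightarrow> f (Suc i) - f i \<le> (c::real)"
  shows "f hi - f lo \<le> (real hi - real lo) * c"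
  using assms
proof (induction hi rule: dec_induct)
  case base then show ?case by simp
next
  case (step m)
  have "f m - f lo \<le> (real m - real lo) * c" using step by auto
  moreover have "f (Suc m) - f m \<le> c" using step by auto
  ultimately show ?case by (simp add: algebra_simps)
qed

lemma sum_ge:
  assumes "lo \<le> hi" "\<And>i. lo \<le> i \<Longrightarrow> i < hi \<Longrightarrow> f (Suc i) - f i \<ge> (c::real)"
  shows "f hi - f lo \<ge> (real hi - real lo) * c"
  using assms
proof (induction hi rule: dec_induct)
  case base then show ?case by simp
next
  case (step m)
  have "f m - f lo \<ge> (real m - real lo) * c" using step by auto
  moreover have "f (Suc m) - f m \<ge> c" using step by auto
  ultimately show ?case by (simp add: algebra_simps)
qed

lemma sum_eq:
  assumes "lo \<le> hi" "\<And>i. lo \<le> i \<Longrightarrow> i < hi \<Longrightarrow> f (Suc i) - f i = (c::real)"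
  shows "f hi - f lo = (real hi - real lo) * c"
  using sum_le[of lo hi f c] sum_ge[of lo hi c f] assms by force

lemma force_ge:
  assumes "\<And>i. lo \<le> i \<Longrightarrow> i < hi \<Longrightarrow> f (Suc i) - f i \<ge> (c::real)"
    and "f hi - f lo = (real hi - real lo) * c" and "lo \<le> i" "i < hi"
  shows "f (Suc i) - f i = c"
proof -
  have a: "f hi - f (Suc i) \<ge> (real hi - real (Suc i)) * c"
    by (rule sum_ge) (use assms in auto)
  have b: "f i - f lo \<ge> (real i - real lo) * c"
    by (rule sum_ge) (use assms in auto)
  have "f (Suc i) - f i \<le> c"
  proof -
    have "f hi - f lo = (f hi - f (Suc i)) + (f (Suc i) - f i) + (f i - f lo)" by simp
    then show ?thesis using a b assms(2) by (simp add: algebra_simps)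
  qed
  then show ?thesis using assms by force
qed

lemma force_le:
  assumes "\<And>i. lo \<le> i \<Longrightarrow> i < hi \<Longrightarrow> f (Suc i) - f i \<le> (c::real)"
    and "f hi - f lo = (real hi - real lo) * c" and "lo \<le> i" "i < hi"
  shows "f (Suc i) - f i = c"
proof -
  have a: "f hi - f (Suc i) \<le> (real hi - real (Suc i)) * c"
    by (rule sum_le) (use assms in auto)
  have b: "f i - f lo \<le> (real i - real lo) * c"
    by (rule sum_le) (use assms in auto)
  have "f (Suc i) - f i \<ge> c"
  proof -
    have "f hi - f lo = (f hi - f (Suc i)) + (f (Suc i) - f i) + (f i - f lo)" by simp
    then show ?thesis using a b assms(2) by (simp add: algebra_simps)
  qed
  then show ?thesis using assms by force
qed

lemma mono_convex:
  assumes "\<And>i i'. 1 \<le> i \<Longrightarrow> i \<le> i' \<Longrightarrow> i' < n \<Longrightarrow> f (Suc i) - f i \<le> f (Suc i') - f i'"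
  shows "convex_on_pts {1..n} f"
  unfolding convex_on_pts_def
proof (intro ballI impI)
  fix x y z assume xyz: "x \<in> {1..n}" "y \<in> {1..n}" "z \<in> {1..n}" "x < y \<and> y < z"
  define c where "c = f y - f (y - 1)"
  have cs: "c = f (Suc (y-1)) - f (y-1)" using xyz c_def by simp
  have 1: "f y - f x \<le> (real y - real x) * c"
  proof (rule sum_le)
    show "x \<le> y" using xyz by simp
    fix i assume i: "x \<le> i" "i < y"
    have "f (Suc i) - f i \<le> f (Suc (y-1)) - f (y-1)"
      by (rule assms) (use i xyz in auto)
    then show "f (Suc i) - f i \<le> c" using cs by simp
  qed
  have 2: "f z - f y \<ge> (real z - real y) * c"
  proof (rule sum_ge)
    show "y \<le> z" using xyz by simp
    fix i assume i: "y \<le> i" "i < z"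
    have "f (Suc (y-1)) - f (y-1) \<le> f (Suc i) - f i"
      by (rule assms) (use i xyz in auto)
    then show "c \<le> f (Suc i) - f i" using cs by simp
  qed
  have p1: "real y - real x > 0" "real z - real y > 0" using xyz by auto
  have "(f y - f x) / (real y - real x) \<le> c" using 1 p1 by (simp add: divide_simps mult.commute)
  also have "c \<le> (f z - f y) / (real z - real y)" using 2 p1 by (simp add: divide_simps mult.commute)
  finally show "(f y - f x) / (real y - real x) \<le> (f z - f y) / (real z - real y)" .
qed

lemma convex_step:
  assumes "convex_on_pts {1..n} f" "1 \<le> i" "i + 2 \<le> n"
  shows "f (Suc i) - f i \<le> f (Suc (Suc i)) - f (Suc i)"
  using assms unfolding convex_on_pts_def
  apply (erule_tac x=i in ballE)
   apply (erule_tac x="Suc i" in ballE)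
    apply (erule_tac x="Suc (Suc i)" in ballE)
     apply (auto simp: of_nat_Suc)
  done

lemma convex_mono:
  assumes "convex_on_pts {1..n} f" "1 \<le> i" "i \<le> i'" "i' < n"
  shows "f (Suc i) - f i \<le> f (Suc i') - f i'"
  using assms(3,4)
proof (induction i' rule: dec_induct)
  case base then show ?case by simp
next
  case (step m)
  have "f (Suc m) - f m \<le> f (Suc (Suc m)) - f (Suc m)"
    by (rule convex_step[OF assms(1)]) (use step assms in auto)
  with step show ?case by simp
qed

lemma convex_subset:
  assumes "B \<subseteq> C" "convex_on_pts C f" shows "convex_on_pts B f"
  using assms unfolding convex_on_pts_def by blast

lemma convex_cong:
  assumes "\<And>q. q \<in> B \<Longrightarrow> g q = f q" shows "convex_on_pts B g = convex_on_pts B f"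
  using assms unfolding convex_on_pts_def by auto

lemma convex_use:
  assumes "convex_on_pts B g" "x \<in> B" "y \<in> B" "z \<in> B" "x < y" "y < z"
  shows "(g y - g x) / (real y - real x) \<le> (g z - g y) / (real z - real y)"
  using assms unfolding convex_on_pts_def by blast

lemma two_vals:
  assumes "num_discrete_derivs n f \<le> 2" "1 \<le> i" "i \<le> n - 1" "1 \<le> k" "k \<le> n - 1"
    "1 \<le> m" "m \<le> n - 1" "f (Suc i) - f i \<noteq> f (Suc k) - f k"
  shows "f (Suc m) - f m = f (Suc i) - f i \<or> f (Suc m) - f m = f (Suc k) - f k"
proof (rule ccontr)
  assume c: "\<not> ?thesis"
  let ?S = "discrete_derivs n f"
  have fin: "finite ?S" unfolding discrete_derivs_def by simp
  have sub: "{f (Suc i) - f i, f (Suc k) - f k, f (Suc m) - f m} \<subseteq> ?S"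
    unfolding discrete_derivs_def using assms by force
  have "card {f (Suc i) - f i, f (Suc k) - f k, f (Suc m) - f m} = 3"
    using c assms(8) by auto
  with card_mono[OF fin sub] assms(1) show False unfolding num_discrete_derivs_def by simp
qed

theorem theorem1:
  fixes n :: nat and f :: "nat \<Rightarrow> real"
  assumes "n \<ge> 3"
    and "num_discrete_derivs n f \<le> 2"
  shows
    "(\<forall>g. (\<forall>q\<in>first_queries n. g q = f q) \<longrightarrow> candidates n g = candidates n f)
     \<and> (\<forall>j \<in> candidates n f. card (first_queries n \<union> {j}) \<le> 5
          \<and> (\<forall>g. (\<forall>q\<in>first_queries n \<union> {j}. g q = f q) \<longrightarrow> final_test n g j = final_test n f j))
     \<and> (candidates n f = {} \<longrightarrow> \<not> convex_on_pts {1..n} f)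
     \<and> (\<forall>j \<in> candidates n f. final_test n f j \<longleftrightarrow> convex_on_pts {1..n} f)"
proof -
  have n3: "n \<ge> 3" by fact
  have P1: "\<forall>g. (\<forall>q\<in>first_queries n. g q = f q) \<longrightarrow> candidates n g = candidates n f"
    by (simp add: first_queries_def candidates_def aff1_def aff2_def)
  have P2: "\<forall>j \<in> candidates n f. card (first_queries n \<union> {j}) \<le> 5
          \<and> (\<forall>g. (\<forall>q\<in>first_queries n \<union> {j}. g q = f q) \<longrightarrow> final_test n g j = final_test n f j)"
  proof (intro ballI conjI allI impI)
    fix j
    have "card (first_queries n \<union> {j}) \<le> card (first_queries n) + 1"
      using card_Un_le[of "first_queries n" "{j}"] by simp
    moreover have "card (first_queries n) \<le> 4"
      unfolding first_queries_def by (simp add: card_insert_if)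
    ultimately show "card (first_queries n \<union> {j}) \<le> 5" by simp
  next
    fix j g assume h: "\<forall>q\<in>first_queries n \<union> {j}. g q = f q"
    have c: "convex_on_pts {1, 2, j, n - 1, n} g = convex_on_pts {1, 2, j, n - 1, n} f"
      by (rule convex_cong) (use h in \<open>auto simp: first_queries_def\<close>)
    show "final_test n g j = final_test n f j"
      unfolding final_test_def c using h by (simp add: first_queries_def aff1_def)
  qed
  define a where "a = f 2 - f 1"
  define b where "b = f n - f (n - 1)"
  have aD: "a = f (Suc 1) - f 1" using a_def by (simp add: numeral_2_eq_2)
  have bD: "b = f (Suc (n-1)) - f (n-1)" using b_def n3 by simp
  have cand_iff: "j \<in> candidates n f \<longleftrightarrow> 1 \<le> j \<and> j \<le> n \<and>
      f 1 + (real j - 1) * a = f n - (real n - real j) * b" for j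
    unfolding candidates_def aff1_def aff2_def a_def b_def by auto
  have FWD: "(\<exists>j. j \<in> candidates n f) \<and> (\<forall>j\<in>candidates n f. final_test n f j)"
    if cv: "convex_on_pts {1..n} f"
  proof -
    have mono: "f (Suc i) - f i \<le> f (Suc i') - f i'" if "1 \<le> i" "i \<le> i'" "i' < n" for i i'
      using convex_mono[OF cv that] .
    have ab: "a \<le> f (Suc i) - f i \<and> f (Suc i) - f i \<le> b" if "1 \<le> i" "i < n" for i
      using mono[of 1 i] mono[of i "n-1"] that aD bD by auto
    have sub: "{1, 2, j, n - 1, n} \<subseteq> {1..n}" if "j \<in> candidates n f" for j
      using that n3 unfolding candidates_def by auto
    show ?thesis
    proof (cases "a = b")
      case True
      have allA: "f (Suc i) - f i = a" if "1 \<le> i" "i < n" for i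
        using ab[OF that] True by auto
      have e1: "f k - f 1 = (real k - 1) * a" if "1 \<le> k" "k \<le> n" for k
        using sum_eq[of 1 k f a] allA that by simp
      have en: "f n - f 1 = (real n - 1) * a" using e1[of n] n3 by simp
      have c1: "1 \<in> candidates n f" unfolding cand_iff using n3 en True
        by (simp add: algebra_simps)
      have ft: "final_test n f j" if "j \<in> candidates n f" for j
      proof -
        have "1 \<le> j" "j \<le> n" using that cand_iff by auto
        then have "f j = aff1 f (real j)" using e1[of j] a_def
          by (simp add: aff1_def algebra_simps)
        then show ?thesis unfolding final_test_def
          using convex_subset[OF sub[OF that] cv] by simp
      qed
      show ?thesis using c1 ft by blast
    next
      case False
      have ab2: "f (Suc i) - f i = a \<or> f (Suc i) - f i = b" if "1 \<le> i" "i < n" for i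
        using two_vals[OF assms(2), of 1 "n-1" i] False aD bD that n3 by auto
      define S where "S = {i \<in> {1..n-1}. f (Suc i) - f i = a}"
      have finS: "finite S" unfolding S_def by simp
      have oneS: "1 \<in> S" unfolding S_def using aD n3 by auto
      define k where "k = Max S"
      have kS: "k \<in> S" unfolding k_def using finS oneS Max_in by blast
      have k1: "1 \<le> k" "k \<le> n - 1" "f (Suc k) - f k = a" using kS unfolding S_def by auto
      have lowA: "f (Suc i) - f i = a" if "1 \<le> i" "i < Suc k" for i
        using mono[of i k] ab[of i] that k1 by force
      have highB: "f (Suc i) - f i = b" if "Suc k \<le> i" "i < n" for i
      proof -
        have "i \<notin> S" using that Max_ge[OF finS, of i] k_def by force
        then show ?thesis using ab2[of i] that k1 unfolding S_def by auto
      qed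
      have e1: "f (Suc k) - f 1 = (real (Suc k) - 1) * a"
        using sum_eq[of 1 "Suc k" f a] lowA k1 by simp
      have e2: "f n - f (Suc k) = (real n - real (Suc k)) * b"
        using sum_eq[of "Suc k" n f b] highB k1 n3 by simp
      have ck: "Suc k \<in> candidates n f" unfolding cand_iff using k1 n3 e1 e2
        by (simp add: algebra_simps)
      have ft: "final_test n f j" if jc: "j \<in> candidates n f" for j
      proof -
        have j1: "f 1 + (real j - 1) * a = f n - (real n - real j) * b" using jc cand_iff by auto
        have j2: "f 1 + (real (Suc k) - 1) * a = f n - (real n - real (Suc k)) * b"
          using ck cand_iff by blast
        have "(real j - real (Suc k)) * (a - b) = 0" using j1 j2 by (simp add: algebra_simps)
        then have "j = Suc k" using False by simp
        then have "f j = aff1 f (real j)" using e1 a_def by (simp add: aff1_def algebra_simps)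
        then show ?thesis unfolding final_test_def
          using convex_subset[OF sub[OF jc] cv] by simp
      qed
      show ?thesis using ck ft by blast
    qed
  qed
  have P3: "candidates n f = {} \<longrightarrow> \<not> convex_on_pts {1..n} f" using FWD by blast
  have BWD: "convex_on_pts {1..n} f" if jc: "j \<in> candidates n f" and ft: "final_test n f j" for j
  proof -
    have j1: "1 \<le> j" "j \<le> n" and jeq: "f 1 + (real j - 1) * a = f n - (real n - real j) * b"
      using jc cand_iff by auto
    have cr: "convex_on_pts {1, 2, j, n - 1, n} f" and fj: "f j = f 1 + (real j - 1) * a"
      using ft unfolding final_test_def aff1_def a_def by auto
    have aleb: "a \<le> b"
    proof (cases "n = 3")
      case True
      then have "(f 2 - f 1) / (real 2 - real 1) \<le> (f 3 - f 2) / (real 3 - real 2)"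
        using convex_use[OF cr, of 1 2 3] True by simp
      then show ?thesis using True a_def b_def by simp
    next
      case False
      then have n4: "n \<ge> 4" using n3 by simp
      have t1: "(f 2 - f 1) / (real 2 - real 1) \<le> (f (n-1) - f 2) / (real (n-1) - real 2)"
        by (rule convex_use[OF cr]) (use n4 in auto)
      have t2: "(f (n-1) - f 2) / (real (n-1) - real 2) \<le> (f n - f (n-1)) / (real n - real (n-1))"
        by (rule convex_use[OF cr]) (use n4 in auto)
      have "real n - real (n-1) = 1" using n4 by simp
      then show ?thesis using t1 t2 a_def b_def by simp
    qed
    show ?thesis
    proof (cases "a = b")
      case True
      have en: "f n - f 1 = (real n - 1) * a" using jeq True by (simp add: algebra_simps)
      have allA: "f (Suc i) - f i = a" if "1 \<le> i" "i < n" for i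
      proof (rule ccontr)
        assume ne: "f (Suc i) - f i \<noteq> a"
        have tv: "f (Suc m) - f m = f (Suc i) - f i \<or> f (Suc m) - f m = a"
          if "1 \<le> m" "m < n" for m
          using two_vals[OF assms(2), of i 1 m] ne aD that \<open>1 \<le> i\<close> \<open>i < n\<close> n3 by auto
        show False
        proof (cases "f (Suc i) - f i > a")
          case True
          have "f (Suc i) - f i = a"
            by (rule force_ge[where lo=1 and hi=n and f=f and c=a]) (use tv True en that in \<open>force+\<close>)
          with ne show False by simp
        next
          case False
          have "f (Suc i) - f i = a"
            by (rule force_le[of 1 n f a]) (use tv False en that in \<open>force+\<close>)
          with ne show False by simp
        qed
      qed
      show ?thesis by (rule mono_convex) (use allA in auto)
    next
      case False
      have ab2: "f (Suc i) - f i = a \<or> f (Suc i) - f i = b" if "1 \<le> i" "i < n" for i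
        using two_vals[OF assms(2), of 1 "n-1" i] False aD bD that n3 by auto
      have e1: "f j - f 1 = (real j - real 1) * a" using fj by simp
      have e2: "f n - f j = (real n - real j) * b" using fj jeq by simp
      have lowA: "f (Suc i) - f i = a" if "1 \<le> i" "i < j" for i
      proof (rule force_ge[where lo=1 and hi=j and f=f and c=a])
        show "a \<le> f (Suc i') - f i'" if "1 \<le> i'" "i' < j" for i'
          using ab2[of i'] aleb that j1 by force
      qed (use e1 that in auto)
      have highB: "f (Suc i) - f i = b" if "j \<le> i" "i < n" for i
      proof (rule force_le[of j n f b])
        show "f (Suc i') - f i' \<le> b" if "j \<le> i'" "i' < n" for i'
          using ab2[of i'] aleb that j1 by force
      qed (use e2 that in auto)
      have D: "f (Suc i) - f i = (if i < j then a else b)" if "1 \<le> i" "i < n" for i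
        using lowA highB that by auto
      show ?thesis
      proof (rule mono_convex)
        fix i i' assume "1 \<le> i" "i \<le> i'" "i' < n"
        then show "f (Suc i) - f i \<le> f (Suc i') - f i'"
          using D[of i] D[of i'] aleb by auto
      qed
    qed
  qed
  have P4: "\<forall>j \<in> candidates n f. final_test n f j \<longleftrightarrow> convex_on_pts {1..n} f"
    using FWD BWD by blast
  show ?thesis using P1 P2 P3 P4 by blast
qed

end
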